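(* Let $A\in\mathbb R^{d\times d}$ be symmetric with $\mathrm{Tr}(A)=0$, and let $k\ge1$ be an integer. Then $$A^{\tilde\otimes k}(I^{\otimes k-1})=\sum_{s=1}^k d_{k,s}\,A^s\cdot A^{\tilde\otimes k-s}(I^{\otimes(k-s)}),\qquad d_{k,s}:=2^{s-1}\frac{(2k-2s-1)!!\,(k-1)!}{(2k-1)!!\,(k-s)!},$$ with the convention $(-1)!!=1$.
   Context: For a $k$-tensor $T\in(\mathbb R^d)^{\otimes k}$, $\mathrm{Sym}(T)_{i_1\dots i_k}=\frac1{k!}\sum_{\pi\in S_k}T_{i_{\pi(1)}\dots i_{\pi(k)}}$. The symmetric tensor product is $A\tilde\otimes B=\mathrm{Sym}(A\otimes B)$, and $A^{\tilde\otimes k}=\mathrm{Sym}(A^{\otimes k})$, viewing the matrix $A$ as a 2-tensor (so $A^{\tilde\otimes k}$ is a symmetric $2k$-tensor). For a symmetric $k$-tensor $T$ and an $a$-tensor $M$ with $a\le k$, the contraction $T(M)$ is the $(k-a)$-tensor $T(M)_{i_1\dots i_{k-a}}=\sum_{j_1,\dots,j_a}T_{j_1\dots j_a i_1\dots i_{k-a}}M_{j_1\dots j_a}$. Thus $A^{\tilde\otimes k}(I^{\otimes k-1})$ is a $d\times d$ matrix, $A^{\tilde\otimes k-s}(I^{\otimes(k-s)})$ is a scalar (equal to $1$ when $s=k$), and $A^s$ is the matrix power. *)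

theory Defs
  imports "HOL-Analysis.Analysis"
begin

text \<open>Tensors over R^d (d = CARD('n)) are represented as functions from index
  lists to reals; a k-tensor is only ever evaluated on index lists of length k.\<close>

type_synonym 'n tensor = "'n list \<Rightarrow> real"

primrec matpow :: "real^'n^'n \<Rightarrow> nat \<Rightarrow> real^'n^'n" where
  "matpow A 0 = mat 1"
| "matpow A (Suc n) = A ** matpow A n"

definition mat_tpow :: "real^'n^'n \<Rightarrow> nat \<Rightarrow> 'n tensor" where
  "mat_tpow A k = (\<lambda>is. \<Prod>j<k. A $ (is ! (2*j)) $ (is ! (2*j+1)))"

definition Sym :: "nat \<Rightarrow> 'n tensor \<Rightarrow> 'n tensor" where
  "Sym k T = (\<lambda>is. (1 / fact k) *
     (\<Sum>\<pi>\<in>{\<pi>. \<pi> permutes {..<k}}. T (map (\<lambda>j. is ! \<pi> j) [0..<k])))"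

definition sym_tpow :: "real^'n^'n \<Rightarrow> nat \<Rightarrow> 'n tensor" where
  "sym_tpow A k = Sym (2*k) (mat_tpow A k)"

definition contract :: "nat \<Rightarrow> 'n tensor \<Rightarrow> 'n tensor \<Rightarrow> 'n tensor" where
  "contract a T M = (\<lambda>is. \<Sum>js\<in>{js :: 'n list. length js = a}. T (js @ is) * M js)"

definition dfact :: "int \<Rightarrow> real" where
  "dfact n = (if n \<le> 0 then 1 else (\<Prod>i\<in>{0..<nat ((n+1) div 2)}. real_of_int (n - 2*int i)))"

definition dcoef :: "nat \<Rightarrow> nat \<Rightarrow> real" where
  "dcoef k s = 2^(s-1) * dfact (2*int k - 2*int s - 1) * fact (k-1)
               / (dfact (2*int k - 1) * fact (k-s))"

end

theory Submission
  imports Defs "HOL-Combinatorics.Multiset_Permutations" "HOL-Combinatorics.List_Permutation"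
begin

fun pg :: "real^'n^'n \<Rightarrow> 'n list \<Rightarrow> real" where
  "pg A [] = 1"
| "pg A [a] = 0"
| "pg A (a#b#r) = A$a$b * pg A r"

definition TT :: "real^'n^'n \<Rightarrow> (nat \<Rightarrow> 'n) \<Rightarrow> nat set \<Rightarrow> real" where
  "TT A x S = (\<Sum>ps\<in>permutations_of_set S. pg A (map x ps))"

lemma mat_tpow_Suc: "mat_tpow A (Suc m) (a#b#r) = A$a$b * mat_tpow A m r"
  unfolding mat_tpow_def by (subst prod.lessThan_Suc_shift) simp

lemma mat_tpow_pg: "length l = 2*k \<Longrightarrow> mat_tpow A k l = pg A l"
proof (induction k arbitrary: l)
  case 0 then show ?case by (simp add: mat_tpow_def)
next
  case (Suc k)
  then obtain a b r where l: "l = a#b#r" and "length r = 2*k"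
    by (cases l; cases "tl l"; auto)
  then show ?case using Suc by (simp add: mat_tpow_Suc)
qed

lemma sum_permutes_list:
  "(\<Sum>\<pi>\<in>{\<pi>. \<pi> permutes {..<n}}. f (map \<pi> [0..<n])) = (\<Sum>ps\<in>permutations_of_set {..<n}. f ps)"
proof (rule sum.reindex_bij_witness[where i = "\<lambda>ps i. if i < n then ps ! i else i"
      and j = "\<lambda>\<pi>. map \<pi> [0..<n]"])
  fix \<pi> assume "\<pi> \<in> {\<pi>. \<pi> permutes {..<n}}"
  then have p: "\<pi> permutes {..<n}" by simp
  show "(\<lambda>i. if i < n then map \<pi> [0..<n] ! i else i) = \<pi>"
    using p by (auto simp: fun_eq_iff permutes_not_in)
  show "map \<pi> [0..<n] \<in> permutations_of_set {..<n}"
  proof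
    show "set (map \<pi> [0..<n]) = {..<n}" using permutes_image[OF p]
      by (simp add: atLeast0LessThan)
    show "distinct (map \<pi> [0..<n])" using permutes_inj_on[OF p]
      by (simp add: distinct_map atLeast0LessThan inj_on_subset)
  qed
next
  fix ps assume "ps \<in> permutations_of_set {..<n}"
  then have s: "set ps = {..<n}" and d: "distinct ps" by (auto dest: permutations_of_setD)
  have len: "length ps = n" using distinct_card[OF d] s by simp
  show "map (\<lambda>i. if i < n then ps ! i else i) [0..<n] = ps"
    using len by (simp add: list_eq_iff_nth_eq)
  show "(\<lambda>i. if i < n then ps ! i else i) \<in> {\<pi>. \<pi> permutes {..<n}}"
  proof (simp, rule bij_imp_permutes)
    have "bij_betw (nth ps) {..<n} (set ps)"
      using d len by (simp add: bij_betw_nth lessThan_atLeast0)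
    then show "bij_betw (\<lambda>i. if i < n then ps ! i else i) {..<n} {..<n}"
      using s by (subst bij_betw_cong[where g="nth ps"]) auto
  qed auto
qed auto

lemma Sym_TT:
  assumes "length l = 2*k"
  shows "Sym (2*k) (mat_tpow A k) l = TT A (nth l) {..<2*k} / fact (2*k)"
proof -
  have "(\<Sum>\<pi>\<in>{\<pi>. \<pi> permutes {..<2*k}}. mat_tpow A k (map (\<lambda>j. l ! \<pi> j) [0..<2*k]))
      = (\<Sum>\<pi>\<in>{\<pi>. \<pi> permutes {..<2*k}}. pg A (map (nth l) (map \<pi> [0..<2*k])))"
    by (rule sum.cong) (auto simp: mat_tpow_pg o_def)
  also have "\<dots> = TT A (nth l) {..<2*k}"
    unfolding TT_def by (rule sum_permutes_list)
  finally show ?thesis unfolding Sym_def by simp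
qed


lemma sum_perms_Cons:
  assumes "finite S" "S \<noteq> {}"
  shows "(\<Sum>ps\<in>permutations_of_set S. f ps) = (\<Sum>p\<in>S. \<Sum>ps\<in>permutations_of_set (S-{p}). f (p#ps))"
proof -
  have "(\<Sum>ps\<in>permutations_of_set S. f ps) = (\<Sum>p\<in>S. \<Sum>ps\<in>(#) p ` permutations_of_set (S-{p}). f ps)"
    unfolding permutations_of_set_nonempty[OF assms(2)]
    by (rule sum.UNION_disjoint) (use assms in auto)
  also have "\<dots> = (\<Sum>p\<in>S. \<Sum>ps\<in>permutations_of_set (S-{p}). f (p#ps))"
    by (rule sum.cong[OF refl], subst sum.reindex) auto
  finally show ?thesis .
qed

lemma TT_empty: "TT A x {} = 1"
  by (simp add: TT_def)

lemma TT_rec: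
  assumes "finite S" "S \<noteq> {}"
  shows "TT A x S = (\<Sum>p\<in>S. \<Sum>q\<in>S-{p}. A$(x p)$(x q) * TT A x (S-{p}-{q}))"
  unfolding TT_def
proof (subst sum_perms_Cons[OF assms], rule sum.cong[OF refl])
  fix p assume p: "p \<in> S"
  show "(\<Sum>ps\<in>permutations_of_set (S - {p}). pg A (map x (p # ps))) =
         (\<Sum>q\<in>S - {p}. A $ x p $ x q * (\<Sum>ps\<in>permutations_of_set (S - {p} - {q}). pg A (map x ps)))"
  proof (cases "S - {p} = {}")
    case True then show ?thesis by (simp only: True) simp
  next
    case False
    show ?thesis
      by (subst sum_perms_Cons) (use False assms in \<open>auto simp: sum_distrib_left\<close>)
  qed
qed

lemma TT_cong: "(\<And>i. i \<in> S \<Longrightarrow> x i = y i) \<Longrightarrow> TT A x S = TT A y S"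
  unfolding TT_def
  by (rule sum.cong[OF refl], rule arg_cong[where f="pg A"]) (auto simp: permutations_of_set_def)

lemma TT_reindex:
  assumes "inj_on f S"
  shows "TT A (x \<circ> f) S = TT A x (f ` S)"
proof -
  have "inj_on (map f) (permutations_of_set S)"
    using assms by (intro inj_onI) (auto simp: permutations_of_set_def inj_on_map_eq_map)
  then show ?thesis unfolding TT_def permutations_of_set_image_inj[OF assms]
    by (simp add: sum.reindex)
qed


lemma sum_minus_if:
  "finite U \<Longrightarrow> (\<Sum>q\<in>U-{p}. g q) = (\<Sum>q\<in>U. if q = p then 0 else g q)"
proof -
  assume "finite U"
  have "U - {p} = {q\<in>U. q \<noteq> p}" by auto
  then show ?thesis using sum.inter_filter[OF \<open>finite U\<close>, of g "\<lambda>q. q \<noteq> p"]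
    by (simp add: if_distrib cong: if_cong) (smt (verit) sum.cong)
qed

lemma swap3:
  fixes f :: "nat \<Rightarrow> nat \<Rightarrow> nat \<Rightarrow> real"
  assumes "finite U"
  shows "(\<Sum>p\<in>U. \<Sum>q\<in>U-{p}. \<Sum>r\<in>U-{p}-{q}. f p q r)
       = (\<Sum>r\<in>U. \<Sum>p\<in>U-{r}. \<Sum>q\<in>U-{r}-{p}. f p q r)"
proof -
  define g where "g p q r = (if p \<noteq> q \<and> r \<noteq> p \<and> r \<noteq> q then f p q r else 0)" for p q r
  have "(\<Sum>p\<in>U. \<Sum>q\<in>U-{p}. \<Sum>r\<in>U-{p}-{q}. f p q r) = (\<Sum>p\<in>U. \<Sum>q\<in>U. \<Sum>r\<in>U. g p q r)"
  proof (rule sum.cong[OF refl])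
    fix p assume "p \<in> U"
    have "(\<Sum>q\<in>U-{p}. \<Sum>r\<in>U-{p}-{q}. f p q r) = (\<Sum>q\<in>U. if q = p then 0 else \<Sum>r\<in>U. if r = p then 0 else if r = q then 0 else f p q r)"
      using assms by (simp add: sum_minus_if)
    also have "\<dots> = (\<Sum>q\<in>U. \<Sum>r\<in>U. g p q r)"
      by (rule sum.cong[OF refl]) (auto simp: g_def intro!: sum.cong)
    finally show "(\<Sum>q\<in>U-{p}. \<Sum>r\<in>U-{p}-{q}. f p q r) = (\<Sum>q\<in>U. \<Sum>r\<in>U. g p q r)" .
  qed
  also have "\<dots> = (\<Sum>p\<in>U. \<Sum>r\<in>U. \<Sum>q\<in>U. g p q r)"
    by (rule sum.cong[OF refl], rule sum.swap)
  also have "\<dots> = (\<Sum>r\<in>U. \<Sum>p\<in>U. \<Sum>q\<in>U. g p q r)"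
    by (rule sum.swap)
  also have "\<dots> = (\<Sum>r\<in>U. \<Sum>p\<in>U-{r}. \<Sum>q\<in>U-{r}-{p}. f p q r)"
  proof (rule sum.cong[OF refl])
    fix r assume "r \<in> U"
    have "(\<Sum>p\<in>U-{r}. \<Sum>q\<in>U-{r}-{p}. f p q r) = (\<Sum>p\<in>U. if p = r then 0 else \<Sum>q\<in>U. if q = r then 0 else if q = p then 0 else f p q r)"
      using assms by (simp add: sum_minus_if)
    also have "\<dots> = (\<Sum>p\<in>U. \<Sum>q\<in>U. g p q r)"
      by (rule sum.cong[OF refl]) (auto simp: g_def intro!: sum.cong)
    finally show "(\<Sum>p\<in>U. \<Sum>q\<in>U. g p q r) = (\<Sum>p\<in>U-{r}. \<Sum>q\<in>U-{r}-{p}. f p q r)" by simp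
  qed
  finally show ?thesis .
qed


lemma symA: "transpose A = A \<Longrightarrow> A$a$b = A$b$a"
proof -
  assume "transpose A = A"
  then have "transpose A $ a $ b = A $ a $ b" by simp
  then show ?thesis by (simp add: transpose_def)
qed

lemma TT_last:
  assumes sym: "transpose A = A"
  shows "finite S \<Longrightarrow> e \<in> S \<Longrightarrow>
    TT A x S = real (card S) * (\<Sum>p\<in>S-{e}. A$(x p)$(x e) * TT A x (S-{p}-{e}))"
proof (induction "card S" arbitrary: S rule: less_induct)
  case less
  note fin = \<open>finite S\<close> and eS = \<open>e \<in> S\<close>
  define U where "U = S - {e}"
  have finU: "finite U" using fin by (simp add: U_def)
  have SU: "S = insert e U" "e \<notin> U" using eS by (auto simp: U_def)
  define a where "a p q = A$(x p)$(x q)" for p q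
  have asym: "a p q = a q p" for p q using symA[OF sym] by (simp add: a_def)
  define B where "B = (\<Sum>p\<in>U. a p e * TT A x (S-{p}-{e}))"
  define C where "C = (\<Sum>p\<in>U. \<Sum>q\<in>U-{p}. a p q * TT A x (S-{p}-{q}))"
  have "TT A x S = (\<Sum>p\<in>S. \<Sum>q\<in>S-{p}. a p q * TT A x (S-{p}-{q}))"
    unfolding a_def using TT_rec[OF fin] eS by auto
  also have "\<dots> = (\<Sum>q\<in>U. a e q * TT A x (S-{e}-{q})) +
      (\<Sum>p\<in>U. \<Sum>q\<in>S-{p}. a p q * TT A x (S-{p}-{q}))"
    by (subst sum.remove[OF fin eS]) (simp add: U_def)
  also have "(\<Sum>q\<in>U. a e q * TT A x (S-{e}-{q})) = B"
    unfolding B_def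
  proof (rule sum.cong[OF refl])
    fix q
    have "S-{e}-{q} = S-{q}-{e}" by blast
    then show "a e q * TT A x (S-{e}-{q}) = a q e * TT A x (S-{q}-{e})" using asym[of e q] by simp
  qed
  also have "(\<Sum>p\<in>U. \<Sum>q\<in>S-{p}. a p q * TT A x (S-{p}-{q})) =
      (\<Sum>p\<in>U. a p e * TT A x (S-{p}-{e}) + (\<Sum>q\<in>U-{p}. a p q * TT A x (S-{p}-{q})))"
  proof (rule sum.cong[OF refl])
    fix p assume pU: "p \<in> U"
    have 1: "S - {p} = insert e (U - {p})" using SU pU by auto
    have 2: "e \<notin> U - {p}" "finite (U - {p})" using SU finU by auto
    show "(\<Sum>q\<in>S-{p}. a p q * TT A x (S-{p}-{q})) =
      a p e * TT A x (S-{p}-{e}) + (\<Sum>q\<in>U-{p}. a p q * TT A x (S-{p}-{q}))"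
      unfolding 1 sum.insert[OF 2(2) 2(1)] ..
  qed
  also have "\<dots> = B + C" unfolding B_def C_def by (rule sum.distrib)
  also have "C = (real (card S) - 2) * B"
  proof -
    have "C = (\<Sum>p\<in>U. \<Sum>q\<in>U-{p}. \<Sum>r\<in>U-{p}-{q}. (real (card S) - 2) * (a p q * a r e * TT A x (S-{p}-{q}-{r}-{e})))"
      unfolding C_def
    proof (intro sum.cong refl)
      fix p q assume pU: "p \<in> U" and qU: "q \<in> U - {p}"
      have lt: "card (S-{p}-{q}) < card S"
        using pU fin by (intro psubset_card_mono) (auto simp: U_def)
      have pS: "p \<in> S" and qS: "q \<in> S - {p}" using pU qU by (auto simp: U_def)
      have cd: "card (S-{p}-{q}) = card S - 2"
        using pS qS fin by (simp add: card_Diff_singleton_if)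
      have "card (S - {p}) > 0" using qS fin by (auto simp: card_gt_0_iff)
      moreover have "card S = Suc (card (S - {p}))"
        using card_Suc_Diff1[OF fin pS] by linarith
      ultimately have c2: "card S \<ge> 2" by linarith
      have eS': "e \<in> S-{p}-{q}" using pU qU eS by (auto simp: U_def)
      have "TT A x (S-{p}-{q}) = real (card (S-{p}-{q})) *
          (\<Sum>r\<in>S-{p}-{q}-{e}. A$(x r)$(x e) * TT A x (S-{p}-{q}-{r}-{e}))"
        using less(1)[OF lt _ eS'] fin by simp
      also have "S-{p}-{q}-{e} = U-{p}-{q}" by (auto simp: U_def)
      finally have "TT A x (S-{p}-{q}) = (real (card S) - 2) *
          (\<Sum>r\<in>U-{p}-{q}. a r e * TT A x (S-{p}-{q}-{r}-{e}))"
        using cd c2 by (simp add: a_def of_nat_diff)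
      then show "a p q * TT A x (S-{p}-{q}) = (\<Sum>r\<in>U-{p}-{q}. (real (card S) - 2) * (a p q * a r e * TT A x (S-{p}-{q}-{r}-{e})))"
        by (simp add: sum_distrib_left mult_ac)
    qed
    also have "\<dots> = (\<Sum>r\<in>U. \<Sum>p\<in>U-{r}. \<Sum>q\<in>U-{r}-{p}. (real (card S) - 2) * (a p q * a r e * TT A x (S-{p}-{q}-{r}-{e})))"
      by (rule swap3[OF finU])
    also have "\<dots> = (\<Sum>r\<in>U. (real (card S) - 2) * (a r e * TT A x (S-{r}-{e})))"
    proof (rule sum.cong[OF refl])
      fix r assume rU: "r \<in> U"
      show "(\<Sum>p\<in>U-{r}. \<Sum>q\<in>U-{r}-{p}. (real (card S) - 2) * (a p q * a r e * TT A x (S-{p}-{q}-{r}-{e})))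
          = (real (card S) - 2) * (a r e * TT A x (S-{r}-{e}))"
      proof (cases "U - {r} = {}")
        case True
        then have "U = {r}" using rU by auto
        then have "card S = 2" using SU rU by (simp add: card_insert_if)
        then show ?thesis by simp
      next
        case False
        have eq: "S-{p}-{q}-{r}-{e} = S-{r}-{e}-{p}-{q}" for p q by auto
        have U': "U - {r} = S - {r} - {e}" by (auto simp: U_def)
        have "TT A x (S-{r}-{e}) = (\<Sum>p\<in>S-{r}-{e}. \<Sum>q\<in>S-{r}-{e}-{p}. a p q * TT A x (S-{r}-{e}-{p}-{q}))"
          unfolding a_def by (rule TT_rec) (use False fin U' in auto)
        then have "TT A x (S-{r}-{e}) = (\<Sum>p\<in>U-{r}. \<Sum>q\<in>U-{r}-{p}. a p q * TT A x (S-{p}-{q}-{r}-{e}))"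
          unfolding U' eq .
        then show ?thesis
          by (simp add: sum_distrib_left mult_ac)
      qed
    qed
    finally show ?thesis unfolding B_def by (simp add: sum_distrib_left)
  qed
  finally have "TT A x S = real (card S) * B" by (simp add: algebra_simps)
  then show ?case by (simp add: B_def a_def U_def)
qed


definition Tl :: "real^'n^'n \<Rightarrow> 'n list \<Rightarrow> real" where
  "Tl A ys = TT A (nth ys) {..<length ys}"

lemma Tl_mset:
  assumes "mset ys = mset zs"
  shows "Tl A ys = Tl A zs"
proof -
  obtain f where f: "bij_betw f {..<length ys} {..<length zs}" "\<forall>i<length ys. ys ! i = zs ! (f i)"
    using permutation_Ex_bij[OF assms] by blast
  have len: "length ys = length zs" using assms by (metis size_mset)
  have "Tl A ys = TT A (nth zs \<circ> f) {..<length ys}"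
    unfolding Tl_def by (rule TT_cong) (use f in auto)
  also have "\<dots> = TT A (nth zs) (f ` {..<length ys})"
    using f(1) by (intro TT_reindex) (auto simp: bij_betw_def)
  also have "f ` {..<length ys} = {..<length zs}" using f(1) by (auto simp: bij_betw_def)
  finally show ?thesis unfolding Tl_def .
qed

lemma Tl_snoc:
  assumes sym: "transpose A = A"
  shows "Tl A (ys @ [y]) = real (length ys + 1) *
     (\<Sum>p<length ys. A$(ys!p)$y * Tl A (take p ys @ drop (Suc p) ys))"
proof -
  define n where "n = length ys"
  define x where "x = nth (ys @ [y])"
  have "Tl A (ys @ [y]) = TT A x {..<Suc n}" by (simp add: Tl_def x_def n_def)
  also have "\<dots> = real (card {..<Suc n}) * (\<Sum>p\<in>{..<Suc n}-{n}. A$(x p)$(x n) * TT A x ({..<Suc n}-{p}-{n}))"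
    by (rule TT_last[OF sym]) auto
  also have "{..<Suc n}-{n} = {..<n}" by auto
  also have "(\<Sum>p\<in>{..<n}. A$(x p)$(x n) * TT A x ({..<Suc n}-{p}-{n}))
     = (\<Sum>p<n. A$(ys!p)$y * Tl A (take p ys @ drop (Suc p) ys))"
  proof (rule sum.cong[OF refl])
    fix p assume "p \<in> {..<n}"
    then have p: "p < n" by simp
    define f where "f i = (if i < p then i else Suc i)" for i
    define zs where "zs = take p ys @ drop (Suc p) ys"
    have lzs: "length zs = n - 1" using p by (simp add: zs_def n_def)
    have inj: "inj_on f {..<n-1}" by (auto simp: f_def inj_on_def split: if_splits)
    have img: "f ` {..<n-1} = {..<Suc n}-{p}-{n}"
    proof
      show "f ` {..<n-1} \<subseteq> {..<Suc n}-{p}-{n}" using p by (auto simp: f_def)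
      show "{..<Suc n}-{p}-{n} \<subseteq> f ` {..<n-1}"
      proof
        fix i assume i: "i \<in> {..<Suc n}-{p}-{n}"
        show "i \<in> f ` {..<n-1}"
        proof (cases "i < p")
          case True then show ?thesis using p by (intro image_eqI[of _ _ i]) (auto simp: f_def)
        next
          case False then show ?thesis using i by (intro image_eqI[of _ _ "i - 1"]) (auto simp: f_def)
        qed
      qed
    qed
    have "TT A x ({..<Suc n}-{p}-{n}) = TT A (x \<circ> f) {..<n-1}"
      using TT_reindex[OF inj, of A x] img by simp
    also have "\<dots> = TT A (nth zs) {..<n-1}"
    proof (rule TT_cong)
      fix i assume "i \<in> {..<n-1}"
      then have i: "i < n - 1" by simp
      show "(x \<circ> f) i = zs ! i"
        using i p by (auto simp: x_def f_def zs_def n_def nth_append min_def)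
    qed
    also have "\<dots> = Tl A zs" by (simp add: Tl_def lzs)
    finally show "A$(x p)$(x n) * TT A x ({..<Suc n}-{p}-{n}) = A$(ys!p)$y * Tl A (take p ys @ drop (Suc p) ys)"
      using p by (simp add: x_def n_def zs_def nth_append)
  qed
  finally show ?thesis by (simp add: n_def)
qed


definition dbl :: "'a list \<Rightarrow> 'a list" where
  "dbl a = concat (map (\<lambda>b. [b,b]) a)"

lemma dbl_simps[simp]: "dbl [] = []" "dbl (b#a) = b#b#dbl a" "dbl (a @ c) = dbl a @ dbl c"
  by (simp_all add: dbl_def)

lemma length_dbl[simp]: "length (dbl a) = 2 * length a"
  by (induction a) auto

lemma sum_len_Suc:
  "(\<Sum>js\<in>{js::'a::finite list. length js = Suc n}. f js) = (\<Sum>b\<in>UNIV. \<Sum>js\<in>{js. length js = n}. f (b#js))"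
proof -
  have "(\<Sum>b\<in>UNIV. \<Sum>js\<in>{js. length js = n}. f (b#js)) = (\<Sum>(b,js)\<in>UNIV \<times> {js. length js = n}. f (b#js))"
    by (rule sum.cartesian_product)
  also have "\<dots> = (\<Sum>js\<in>{js::'a::finite list. length js = Suc n}. f js)"
    by (rule sum.reindex_bij_witness[where j = "\<lambda>(b,js). b#js" and i = "\<lambda>l. (hd l, tl l)"])
       (auto simp: length_Suc_conv)
  finally show ?thesis ..
qed

lemma mat1_entry: "(mat 1 :: real^'n^'n) $ b $ c = (if b = c then 1 else 0)"
  by (simp add: mat_def)

lemma contract_dbl:
  "(\<Sum>js\<in>{js::'n::finite list. length js = 2*m}. g js * mat_tpow (mat 1 :: real^'n^'n) m js)
     = (\<Sum>a\<in>{a. length a = m}. g (dbl a))"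
proof (induction m arbitrary: g)
  case 0
  have "{js::'n list. length js = 0} = {[]}" by auto
  then show ?case by (simp add: mat_tpow_def)
next
  case (Suc m)
  have "(\<Sum>js\<in>{js::'n list. length js = 2*Suc m}. g js * mat_tpow (mat 1 :: real^'n^'n) (Suc m) js)
      = (\<Sum>b\<in>UNIV. \<Sum>c\<in>UNIV. \<Sum>js\<in>{js. length js = 2*m}. g (b#c#js) * mat_tpow (mat 1 :: real^'n^'n) (Suc m) (b#c#js))"
    by (simp add: sum_len_Suc)
  also have "\<dots> = (\<Sum>b\<in>UNIV. \<Sum>c\<in>UNIV. if b = c then (\<Sum>js\<in>{js. length js = 2*m}. g (b#b#js) * mat_tpow (mat 1 :: real^'n^'n) m js) else 0)"
    by (intro sum.cong refl) (auto simp: mat_tpow_Suc mat1_entry)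
  also have "\<dots> = (\<Sum>b\<in>UNIV. \<Sum>js\<in>{js. length js = 2*m}. g (b#b#js) * mat_tpow (mat 1 :: real^'n^'n) m js)"
    by simp
  also have "\<dots> = (\<Sum>b\<in>UNIV. \<Sum>a\<in>{a. length a = m}. g (b#b#dbl a))"
    using Suc.IH by simp
  also have "\<dots> = (\<Sum>a\<in>{a. length a = Suc m}. g (dbl a))"
    by (simp add: sum_len_Suc)
  finally show ?case .
qed

lemma sum_extract:
  assumes "t < m"
  shows "(\<Sum>a\<in>{a::'a::finite list. length a = m}. F (a!t) (take t a @ drop (Suc t) a))
       = (\<Sum>b\<in>UNIV. \<Sum>a'\<in>{a'. length a' = m - 1}. F b a')"
proof -
  have "(\<Sum>b\<in>UNIV. \<Sum>a'\<in>{a'. length a' = m - 1}. F b a') = (\<Sum>(b,a')\<in>UNIV \<times> {a'. length a' = m - 1}. F b a')"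
    by (rule sum.cartesian_product)
  also have "\<dots> = (\<Sum>a\<in>{a::'a::finite list. length a = m}. F (a!t) (take t a @ drop (Suc t) a))"
  proof (rule sum.reindex_bij_witness[where j = "\<lambda>(b,a'). take t a' @ b # drop t a'" and i = "\<lambda>a. (a!t, take t a @ drop (Suc t) a)"])
    fix a :: "'a list" assume "a \<in> {a. length a = m}"
    then have l: "length a = m" by simp
    show "(\<lambda>(b, a'). take t a' @ b # drop t a') (a ! t, take t a @ drop (Suc t) a) = a"
      using l assms by (simp add: min_def id_take_nth_drop[symmetric])
    show "(a ! t, take t a @ drop (Suc t) a) \<in> UNIV \<times> {a'. length a' = m - 1}"
      using l assms by simp
  next
    fix ba :: "'a \<times> 'a list" assume "ba \<in> UNIV \<times> {a'. length a' = m - 1}"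
    then obtain b a' where ba: "ba = (b, a')" and l: "length a' = m - 1" by auto
    show "(\<lambda>a. (a ! t, take t a @ drop (Suc t) a)) ((\<lambda>(b, a'). take t a' @ b # drop t a') ba) = ba"
      using l assms ba by (simp add: nth_append min_def)
    show "(\<lambda>(b, a'). take t a' @ b # drop t a') ba \<in> {a. length a = m}"
      using l assms ba by simp
    show "(case (\<lambda>(b, a'). take t a' @ b # drop t a') ba ! t of b \<Rightarrow> \<lambda>a. F b a) (take t ((\<lambda>(b, a'). take t a' @ b # drop t a') ba) @ drop (Suc t) ((\<lambda>(b, a'). take t a' @ b # drop t a') ba)) = (case ba of (b, a') \<Rightarrow> F b a')"
      using l assms ba by (simp add: nth_append min_def)
  qed
  finally show ?thesis ..
qed

lemma sum_even_odd: "(\<Sum>p<2*(m::nat). (h::nat\<Rightarrow>real) p) = (\<Sum>t<m. h (2*t) + h (2*t+1))"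
  by (induction m) (simp_all add: add_ac)


lemma del_dbl:
  fixes i :: 'a and a :: "'a list"
  assumes t: "t < length a" and r: "r < 2"
  defines "l \<equiv> dbl a @ [i]"
  shows "l ! (2*t+r) = a ! t"
    and "mset (take (2*t+r) l @ drop (Suc (2*t+r)) l) = mset (dbl (take t a @ drop (Suc t) a) @ [i, a!t])"
proof -
  define U where "U = dbl (take t a)"
  define W where "W = dbl (drop (Suc t) a)"
  define b where "b = a ! t"
  have "a = take t a @ b # drop (Suc t) a" using t by (simp add: b_def id_take_nth_drop)
  then have "dbl a = U @ b # b # W" unfolding U_def W_def by (metis append_Cons append_Nil dbl_simps(2,3))
  then have l: "l = U @ b # b # W @ [i]" by (simp add: l_def)
  have lU: "length U = 2*t" using t by (simp add: U_def min_def)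
  show "l ! (2*t+r) = a ! t"
    using r lU unfolding l b_def[symmetric] by (cases r) (auto simp: nth_append)
  have r01: "r = 0 \<or> r = 1" using r by auto
  show "mset (take (2*t+r) l @ drop (Suc (2*t+r)) l) = mset (dbl (take t a @ drop (Suc t) a) @ [i, a!t])"
    using r01 lU unfolding l b_def[symmetric] by (auto simp: U_def[symmetric] W_def[symmetric])
qed

lemma Tl_dbl_expand:
  assumes sym: "transpose A = A" and la: "length a = m"
  shows "Tl A (dbl a @ [i,j]) = real (2*m+2) * (A$i$j * Tl A (dbl a) +
     2 * (\<Sum>t<m. A$(a!t)$j * Tl A (dbl (take t a @ drop (Suc t) a) @ [i, a!t])))"
proof -
  define l where "l = dbl a @ [i]"
  have ll: "length l = Suc (2*m)" using la by (simp add: l_def)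
  have "Tl A (dbl a @ [i,j]) = Tl A (l @ [j])" by (simp add: l_def)
  also have "\<dots> = real (2*m+2) * (\<Sum>p<Suc (2*m). A$(l!p)$j * Tl A (take p l @ drop (Suc p) l))"
    using Tl_snoc[OF sym, of l j] ll by simp
  also have "(\<Sum>p<Suc (2*m). A$(l!p)$j * Tl A (take p l @ drop (Suc p) l))
     = (\<Sum>p<2*m. A$(l!p)$j * Tl A (take p l @ drop (Suc p) l)) + A$i$j * Tl A (dbl a)"
    using la by (simp add: l_def nth_append)
  also have "(\<Sum>p<2*m. A$(l!p)$j * Tl A (take p l @ drop (Suc p) l))
     = (\<Sum>t<m. 2 * (A$(a!t)$j * Tl A (dbl (take t a @ drop (Suc t) a) @ [i, a!t])))"
    unfolding sum_even_odd
  proof (rule sum.cong[OF refl])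
    fix t assume "t \<in> {..<m}"
    then have t: "t < length a" using la by simp
    have e0: "l ! (2*t+0) = a!t" and m0: "mset (take (2*t+0) l @ drop (Suc (2*t+0)) l) = mset (dbl (take t a @ drop (Suc t) a) @ [i, a!t])"
      using del_dbl[OF t, of 0 i] by (simp_all add: l_def)
    have e1: "l ! (2*t+1) = a!t" and m1: "mset (take (2*t+1) l @ drop (Suc (2*t+1)) l) = mset (dbl (take t a @ drop (Suc t) a) @ [i, a!t])"
      using del_dbl[OF t, of 1 i] by (simp_all add: l_def)
    show "A$(l!(2*t))$j * Tl A (take (2*t) l @ drop (Suc (2*t)) l) +
          A$(l!(2*t+1))$j * Tl A (take (2*t+1) l @ drop (Suc (2*t+1)) l) =
          2 * (A$(a!t)$j * Tl A (dbl (take t a @ drop (Suc t) a) @ [i, a!t]))"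
      using e0 e1 Tl_mset[OF m0, of A] Tl_mset[OF m1, of A] by simp
  qed
  finally show ?thesis by (simp add: sum_distrib_left algebra_simps)
qed

definition Gam :: "real^'n^'n \<Rightarrow> nat \<Rightarrow> real" where
  "Gam A m = (\<Sum>a\<in>{a::'n list. length a = m}. Tl A (dbl a))"

definition Lam :: "real^'n^'n \<Rightarrow> nat \<Rightarrow> 'n \<Rightarrow> 'n \<Rightarrow> real" where
  "Lam A m i j = (\<Sum>a\<in>{a::'n list. length a = m}. Tl A (dbl a @ [i,j]))"

lemma Lam_rec:
  fixes A :: "real^'n^'n"
  assumes sym: "transpose A = A"
  shows "Lam A m i j = real (2*m+2) * (A$i$j * Gam A m + 2 * real m * (\<Sum>b\<in>UNIV. A$b$j * Lam A (m-1) i b))"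
proof -
  define F where "F b a' = A$b$j * Tl A (dbl a' @ [i, b])" for b a'
  have "Lam A m i j = (\<Sum>a\<in>{a::'n list. length a = m}. real (2*m+2) * (A$i$j * Tl A (dbl a) +
     2 * (\<Sum>t<m. F (a!t) (take t a @ drop (Suc t) a))))"
    unfolding Lam_def F_def by (intro sum.cong refl Tl_dbl_expand[OF sym]) simp
  also have "\<dots> = real (2*m+2) * (\<Sum>a\<in>{a::'n list. length a = m}. (A$i$j * Tl A (dbl a) +
     2 * (\<Sum>t<m. F (a!t) (take t a @ drop (Suc t) a))))"
    by (rule sum_distrib_left[symmetric])
  also have "\<dots> = real (2*m+2) * ((\<Sum>a\<in>{a::'n list. length a = m}. A$i$j * Tl A (dbl a)) +
     (\<Sum>a\<in>{a::'n list. length a = m}. 2 * (\<Sum>t<m. F (a!t) (take t a @ drop (Suc t) a))))"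
    by (simp only: sum.distrib)
  also have "(\<Sum>a\<in>{a::'n list. length a = m}. A$i$j * Tl A (dbl a)) = A$i$j * Gam A m"
    unfolding Gam_def by (rule sum_distrib_left[symmetric])
  also have "(\<Sum>a\<in>{a::'n list. length a = m}. 2 * (\<Sum>t<m. F (a!t) (take t a @ drop (Suc t) a)))
     = 2 * (\<Sum>a\<in>{a::'n list. length a = m}. \<Sum>t<m. F (a!t) (take t a @ drop (Suc t) a))"
    by (rule sum_distrib_left[symmetric])
  also have "(\<Sum>a\<in>{a::'n list. length a = m}. \<Sum>t<m. F (a!t) (take t a @ drop (Suc t) a))
     = (\<Sum>t<m. \<Sum>a\<in>{a::'n list. length a = m}. F (a!t) (take t a @ drop (Suc t) a))"
    by (rule sum.swap)
  also have "(\<Sum>t<m. \<Sum>a\<in>{a::'n list. length a = m}. F (a!t) (take t a @ drop (Suc t) a))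
      = (\<Sum>t<m. \<Sum>b\<in>UNIV. \<Sum>a'\<in>{a'::'n list. length a' = m - 1}. F b a')"
    by (intro sum.cong refl sum_extract) simp
  also have "\<dots> = real m * (\<Sum>b\<in>UNIV. A$b$j * Lam A (m-1) i b)"
    by (simp add: Lam_def F_def sum_distrib_left)
  finally show ?thesis by simp
qed


lemma dfact_pos: "dfact n > 0"
  unfolding dfact_def by (auto intro!: prod_pos)

lemma dfact_rec:
  assumes "n \<ge> 1"
  shows "dfact n = real_of_int n * dfact (n - 2)"
proof -
  have N: "nat ((n+1) div 2) = Suc (nat ((n - 1) div 2))" using assms by simp
  have "dfact n = (\<Prod>i<Suc (nat ((n - 1) div 2)). real_of_int (n - 2*int i))"
    using assms N by (simp add: dfact_def atLeast0LessThan)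
  also have "\<dots> = real_of_int n * (\<Prod>i<nat ((n - 1) div 2). real_of_int (n - 2 - 2*int i))"
    by (subst prod.lessThan_Suc_shift) (simp add: algebra_simps)
  also have "(\<Prod>i<nat ((n - 1) div 2). real_of_int (n - 2 - 2*int i)) = dfact (n - 2)"
  proof (cases "n - 2 \<le> 0")
    case True
    then have "nat ((n - 1) div 2) = 0" using assms by (cases "n = 1") auto
    then show ?thesis using True by (simp add: dfact_def)
  next
    case False
    then show ?thesis by (simp add: dfact_def atLeast0LessThan)
  qed
  finally show ?thesis .
qed

lemma dcoef_11: "dcoef 1 1 = 1"
  by (simp add: dcoef_def dfact_def)

lemma dcoef_S1: "dcoef (Suc (Suc m)) 1 = 1 / (2 * real m + 3)"
proof -
  have a1: "2 * int (Suc (Suc m)) - 2 * int 1 - 1 = 2 * int m + 1" by simp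
  have a2: "2 * int (Suc (Suc m)) - 1 = 2 * int m + 3" by simp
  have r: "dfact (2 * int m + 3) = (2 * real m + 3) * dfact (2 * int m + 1)"
    using dfact_rec[of "2 * int m + 3"] by (simp add: add.commute)
  have nz: "dfact (2 * int m + 1) * fact (Suc m) \<noteq> 0" using dfact_pos[of "2 * int m + 1"] by simp
  have "dcoef (Suc (Suc m)) 1 = (dfact (2 * int m + 1) * fact (Suc m)) / ((2 * real m + 3) * (dfact (2 * int m + 1) * fact (Suc m)))"
    unfolding dcoef_def a1 a2 r by (simp add: mult_ac del: fact_Suc)
  also have "\<dots> = 1 / (2 * real m + 3)" using nz by simp
  finally show ?thesis .
qed

lemma dcoef_SS:
  assumes "1 \<le> s"
  shows "dcoef (Suc (Suc m)) (Suc s) = (2 * real m + 2) / (2 * real m + 3) * dcoef (Suc m) s"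
proof -
  have a1: "2 * int (Suc (Suc m)) - 2 * int (Suc s) - 1 = 2 * int (Suc m) - 2 * int s - 1" by simp
  have a2: "2 * int (Suc (Suc m)) - 1 = 2 * int m + 3" by simp
  have a3: "2 * int (Suc m) - 1 = 2 * int m + 1" by simp
  have r: "dfact (2 * int m + 3) = (2 * real m + 3) * dfact (2 * int m + 1)"
    using dfact_rec[of "2 * int m + 3"] by (simp add: add.commute)
  have p: "(2::real) ^ (Suc s - 1) = 2 * 2 ^ (s - 1)" using assms
    by (cases s) auto
  have f: "fact (Suc (Suc m) - 1) = (real m + 1) * (fact m :: real)" by simp
  have f2: "Suc (Suc m) - Suc s = Suc m - s" by simp
  show ?thesis unfolding dcoef_def a1 a2 a3 r p f f2
    using dfact_pos[of "2 * int m + 1"] by (simp add: field_simps)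
qed


lemma matpow_Suc': "matpow A (Suc n) = matpow A n ** A"
proof (induction n)
  case 0 then show ?case by (simp add: matrix_mul_rid matrix_mul_lid)
next
  case (Suc n)
  have "matpow A (Suc (Suc n)) = A ** (matpow A n ** A)" using Suc by simp
  also have "\<dots> = matpow A (Suc n) ** A" by (simp add: matrix_mul_assoc)
  finally show ?case .
qed

lemma matpow_entry_Suc: "matpow A (Suc s) $ i $ j = (\<Sum>b\<in>UNIV. matpow A s $ i $ b * A $ b $ j)"
  unfolding matpow_Suc' by (simp add: matrix_matrix_mult_def)

lemma contract_L:
  fixes A :: "real^'n^'n"
  shows "contract (2*m) (sym_tpow A (Suc m)) (mat_tpow (mat 1) m) [i,j] = Lam A m i j / fact (2*m+2)"
proof -
  have "contract (2*m) (sym_tpow A (Suc m)) (mat_tpow (mat 1) m) [i,j]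
      = (\<Sum>a\<in>{a::'n list. length a = m}. sym_tpow A (Suc m) (dbl a @ [i,j]))"
    unfolding contract_def by (rule contract_dbl)
  also have "\<dots> = (\<Sum>a\<in>{a::'n list. length a = m}. Tl A (dbl a @ [i,j]) / fact (2*m+2))"
  proof (rule sum.cong[OF refl])
    fix a :: "'n list" assume "a \<in> {a. length a = m}"
    then have l: "length (dbl a @ [i,j]) = 2 * Suc m" by simp
    show "sym_tpow A (Suc m) (dbl a @ [i,j]) = Tl A (dbl a @ [i,j]) / fact (2*m+2)"
      unfolding sym_tpow_def Sym_TT[OF l] Tl_def l by simp
  qed
  also have "\<dots> = Lam A m i j / fact (2*m+2)"
    unfolding Lam_def by (rule sum_divide_distrib[symmetric])
  finally show ?thesis .
qed

lemma contract_C: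
  fixes A :: "real^'n^'n"
  shows "contract (2*m) (sym_tpow A m) (mat_tpow (mat 1) m) [] = Gam A m / fact (2*m)"
proof -
  have "contract (2*m) (sym_tpow A m) (mat_tpow (mat 1) m) []
      = (\<Sum>a\<in>{a::'n list. length a = m}. sym_tpow A m (dbl a))"
    unfolding contract_def using contract_dbl[where g = "\<lambda>js. sym_tpow A m js" and m = m] by simp
  also have "\<dots> = (\<Sum>a\<in>{a::'n list. length a = m}. Tl A (dbl a) / fact (2*m))"
  proof (rule sum.cong[OF refl])
    fix a :: "'n list" assume "a \<in> {a. length a = m}"
    then have l: "length (dbl a) = 2 * m" by simp
    show "sym_tpow A m (dbl a) = Tl A (dbl a) / fact (2*m)"
      unfolding sym_tpow_def Sym_TT[OF l] Tl_def l by simp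
  qed
  also have "\<dots> = Gam A m / fact (2*m)"
    unfolding Gam_def by (rule sum_divide_distrib[symmetric])
  finally show ?thesis .
qed

definition LL :: "real^'n^'n \<Rightarrow> nat \<Rightarrow> 'n \<Rightarrow> 'n \<Rightarrow> real" where
  "LL A m i j = Lam A m i j / fact (2*m+2)"

definition CC :: "real^'n^'n \<Rightarrow> nat \<Rightarrow> real" where
  "CC A m = Gam A m / fact (2*m)"

lemma LL_rec:
  fixes A :: "real^'n^'n"
  assumes sym: "transpose A = A"
  shows "LL A m i j = (CC A m * A$i$j + 2 * real m * (\<Sum>b\<in>UNIV. LL A (m-1) i b * A$b$j)) / (2 * real m + 1)"
proof -
  have f: "(fact (2*m+2) :: real) = real (2*m+2) * (2 * real m + 1) * fact (2*m)"
    by (simp add: algebra_simps)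
  have fp: "(fact (2*m) :: real) > 0" by simp
  have cancel: "c \<noteq> 0 \<Longrightarrow> c * x / (c * y * z) = x / (y * z)" for c x y z :: real by simp
  have "LL A m i j = real (2*m+2) * (A$i$j * Gam A m + 2 * real m * (\<Sum>b\<in>UNIV. A$b$j * Lam A (m-1) i b))
      / (real (2*m+2) * (2 * real m + 1) * fact (2*m))"
    unfolding LL_def Lam_rec[OF sym, of m i j] f ..
  also have "\<dots> = (A$i$j * Gam A m + 2 * real m * (\<Sum>b\<in>UNIV. A$b$j * Lam A (m-1) i b)) / ((2 * real m + 1) * fact (2*m))"
    by (rule cancel) simp
  also have "\<dots> = (CC A m * A$i$j + 2 * real m * (\<Sum>b\<in>UNIV. LL A (m-1) i b * A$b$j)) / (2 * real m + 1)"
  proof (cases m)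
    case 0
    then show ?thesis by (simp add: CC_def)
  next
    case (Suc k)
    have e: "2 * (m - 1) + 2 = 2 * m" using Suc by simp
    have "(\<Sum>b\<in>UNIV. LL A (m-1) i b * A$b$j) = (\<Sum>b\<in>UNIV. A$b$j * Lam A (m-1) i b) / fact (2*m)"
      unfolding LL_def e by (simp add: sum_divide_distrib mult_ac)
    then show ?thesis using fp by (simp add: CC_def field_simps)
  qed
  finally show ?thesis .
qed

lemma main_entry:
  fixes A :: "real^'n^'n"
  assumes sym: "transpose A = A"
  shows "LL A m i j = (\<Sum>s=1..Suc m. dcoef (Suc m) s * CC A (Suc m - s) * matpow A s $ i $ j)"
proof (induction m arbitrary: i j)
  case 0
  show ?case using LL_rec[OF sym, of 0 i j] by (simp add: dcoef_11[unfolded One_nat_def] matrix_mul_rid)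
next
  case (Suc m)
  define c where "c s = dcoef (Suc m) s * CC A (Suc m - s)" for s
  have "(\<Sum>b\<in>UNIV. LL A m i b * A$b$j) = (\<Sum>b\<in>UNIV. (\<Sum>s=1..Suc m. c s * matpow A s $ i $ b) * A$b$j)"
    by (simp only: Suc.IH c_def)
  also have "\<dots> = (\<Sum>b\<in>UNIV. \<Sum>s=1..Suc m. c s * (matpow A s $ i $ b * A$b$j))"
    by (simp only: sum_distrib_right mult.assoc)
  also have "\<dots> = (\<Sum>s=1..Suc m. c s * matpow A (Suc s) $ i $ j)"
    by (subst sum.swap, rule sum.cong[OF refl], simp only: matpow_entry_Suc sum_distrib_left)
  finally have S: "(\<Sum>b\<in>UNIV. LL A m i b * A$b$j) = (\<Sum>s=1..Suc m. c s * matpow A (Suc s) $ i $ j)" .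
  define X where "X = (\<Sum>s=1..Suc m. c s * matpow A (Suc s) $ i $ j)"
  have R1: "(\<Sum>s=1..Suc (Suc m). dcoef (Suc (Suc m)) s * CC A (Suc (Suc m) - s) * matpow A s $ i $ j)
     = dcoef (Suc (Suc m)) 1 * CC A (Suc m) * matpow A 1 $ i $ j +
       (\<Sum>s=1..Suc m. dcoef (Suc (Suc m)) (Suc s) * CC A (Suc m - s) * matpow A (Suc s) $ i $ j)"
    by (subst sum.atLeast_Suc_atMost, simp, subst sum.shift_bounds_cl_Suc_ivl, simp del: matpow.simps)
  have R2: "(\<Sum>s=1..Suc m. dcoef (Suc (Suc m)) (Suc s) * CC A (Suc m - s) * matpow A (Suc s) $ i $ j)
     = (2 * real m + 2) / (2 * real m + 3) * X"
    unfolding X_def sum_distrib_left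
    by (rule sum.cong[OF refl]) (simp add: dcoef_SS c_def del: matpow.simps)
  have d1: "dcoef (Suc (Suc m)) 1 * CC A (Suc m) * matpow A 1 $ i $ j = CC A (Suc m) * A $ i $ j / (2 * real m + 3)"
    by (simp only: dcoef_S1 matpow.simps matrix_mul_rid) simp
  have L: "LL A (Suc m) i j = (CC A (Suc m) * A $ i $ j + (2 * real m + 2) * X) / (2 * real m + 3)"
  proof -
    have Q: "LL A (Suc m) i j = (CC A (Suc m) * A$i$j + 2 * real (Suc m) * (\<Sum>b\<in>UNIV. LL A m i b * A$b$j)) / (2 * real (Suc m) + 1)"
      using LL_rec[OF sym, of "Suc m" i j] by (simp only: diff_Suc_1)
    show ?thesis unfolding Q S[folded X_def] by (simp add: algebra_simps)
  qed
  have helper: "(a + b * Y) / d = a / d + b / d * Y" for a b d Y :: real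
    by (simp add: add_divide_distrib)
  show ?case unfolding R1 R2 d1 L by (rule helper)
qed


theorem lemma29:
  fixes A :: "real^'n^'n" and k :: nat
  assumes "transpose A = A" and "trace A = 0" and "k \<ge> 1"
  shows "(\<chi> i j. contract (2*(k-1)) (sym_tpow A k) (mat_tpow (mat 1) (k-1)) [i, j])
       = (\<Sum>s=1..k. (dcoef k s * contract (2*(k-s)) (sym_tpow A (k-s)) (mat_tpow (mat 1) (k-s)) [])
                       *\<^sub>R matpow A s)"
proof -
  obtain m where k: "k = Suc m" using assms(3) by (cases k) auto
  have "(\<chi> i j. contract (2*(k-1)) (sym_tpow A k) (mat_tpow (mat 1) (k-1)) [i, j]) $ i $ j
     = (\<Sum>s=1..k. (dcoef k s * contract (2*(k-s)) (sym_tpow A (k-s)) (mat_tpow (mat 1) (k-s)) [])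
                       *\<^sub>R matpow A s) $ i $ j" for i j
  proof -
    have l: "(\<chi> i j. contract (2*(k-1)) (sym_tpow A k) (mat_tpow (mat 1) (k-1)) [i, j]) $ i $ j = LL A m i j"
      by (simp add: k contract_L LL_def)
    have r: "(\<Sum>s=1..k. (dcoef k s * contract (2*(k-s)) (sym_tpow A (k-s)) (mat_tpow (mat 1) (k-s)) [])
                       *\<^sub>R matpow A s) $ i $ j
        = (\<Sum>s=1..Suc m. dcoef (Suc m) s * CC A (Suc m - s) * matpow A s $ i $ j)"
      unfolding k sum_component vector_scaleR_component contract_C CC_def by simp
    show ?thesis unfolding l r by (rule main_entry[OF assms(1)])
  qed
  then show ?thesis by (simp add: vec_eq_iff)
qed

end
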